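(* Let $A$ and $B$ be bounded modular lattices and let $(\alpha,\beta)$ be a retractable Galois connection between $A$ and $B$ such that $\beta(0)=0$. Then: (i) $\mathrm{udim}(B)\le \mathrm{udim}(A)$. (ii) If $(\alpha,\beta)$ is essential, then $\mathrm{udim}(A)=\mathrm{udim}(B)$. (iii) If $A$ is cyclically generated, $(\alpha,\beta)$ is cyclically essential and $\beta$ is additive, then $\mathrm{udim}(A)=\mathrm{udim}(B)$.
   Context: A bounded lattice $(X,\wedge,\vee,0,1)$ has least element $0$ and greatest element $1$, $0\neq1$. A subset $Y\subseteq X\setminus\{0\}$ is join-independent if $(y_1\vee\cdots\vee y_n)\wedge x=0$ for every finite subset $\{y_1,\dots,y_n\}\subseteq Y$ and every $x\in Y\setminus\{y_1,\dots,y_n\}$. The uniform dimension $\mathrm{udim}(X)$ is the supremum of all $k$ such that $X$ has a join-independent subset with $k$ elements if this supremum is finite, and is $\infty$ otherwise (inequalities are understood in $\mathbb{N}\cup\{\infty\}$). A Galois connection between lattices $A$ and $B$ is a pair of order-preserving maps $\alpha:A\to B$, $\beta:B\to A$ with $\alpha(a)\le b$ iff $a\le\beta(b)$. For $a\le c$, $a$ is essential in $[0,c]=\{x:0\le x\le c\}$ if for every $x\le c$, $a\wedge x=0$ implies $x=0$. An element $a$ is cyclic if $[0,a]$ is a distributive lattice satisfying the ascending chain condition; $A$ is cyclically generated if every element is a join of cyclic elements. The Galois connection is essential (resp. cyclically essential) if for every $a\in A$ (resp. every cyclic $a\in A$), $a$ is essential in $[0,\beta\alpha(a)]$; it is retractable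 if for every $b\in B$, $\alpha\beta(b)$ is essential in $[0,b]$. The map $\beta$ is additive if $\beta(b\vee b')=\beta(b)\vee\beta(b')$ for all $b,b'\in B$ with $b\wedge b'=0$. *)

theory Defs
  imports Main "HOL-Library.Extended_Nat"
begin

definition modular_lattice :: "'a::bounded_lattice itself \<Rightarrow> bool" where
  "modular_lattice _ \<longleftrightarrow> (bot::'a) \<noteq> top \<and>
     (\<forall>x y z::'a. x \<le> z \<longrightarrow> sup x (inf y z) = inf (sup x y) z)"

definition fjoin :: "'a::bounded_lattice set \<Rightarrow> 'a" where
  "fjoin F = Finite_Set.fold sup bot F"

definition join_independent :: "'a::bounded_lattice set \<Rightarrow> bool" where
  "join_independent Y \<longleftrightarrow> bot \<notin> Y \<and>
     (\<forall>F x. finite F \<and> F \<subseteq> Y \<and> x \<in> Y - F \<longrightarrow> inf (fjoin F) x = bot)"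

definition udim :: "'a::bounded_lattice itself \<Rightarrow> enat" where
  "udim _ = Sup {enat (card Y) | Y::'a set. finite Y \<and> join_independent Y}"

definition galois_connection :: "('a::order \<Rightarrow> 'b::order) \<Rightarrow> ('b \<Rightarrow> 'a) \<Rightarrow> bool" where
  "galois_connection \<alpha> \<beta> \<longleftrightarrow> mono \<alpha> \<and> mono \<beta> \<and> (\<forall>a b. \<alpha> a \<le> b \<longleftrightarrow> a \<le> \<beta> b)"

definition essential_in :: "'a::bounded_lattice \<Rightarrow> 'a \<Rightarrow> bool" where
  "essential_in a c \<longleftrightarrow> a \<le> c \<and> (\<forall>x. x \<le> c \<and> inf a x = bot \<longrightarrow> x = bot)"

definition cyclic :: "'a::bounded_lattice \<Rightarrow> bool" where
  "cyclic a \<longleftrightarrow>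
     (\<forall>x y z. x \<le> a \<and> y \<le> a \<and> z \<le> a \<longrightarrow> inf x (sup y z) = sup (inf x y) (inf x z)) \<and>
     \<not> (\<exists>f::nat \<Rightarrow> 'a. \<forall>n. f n \<le> a \<and> f n < f (Suc n))"

definition is_join_of :: "'a::bounded_lattice \<Rightarrow> 'a set \<Rightarrow> bool" where
  "is_join_of x S \<longleftrightarrow> (\<forall>s\<in>S. s \<le> x) \<and> (\<forall>u. (\<forall>s\<in>S. s \<le> u) \<longrightarrow> x \<le> u)"

definition cyclically_generated :: "'a::bounded_lattice itself \<Rightarrow> bool" where
  "cyclically_generated _ \<longleftrightarrow> (\<forall>x::'a. \<exists>S. (\<forall>s\<in>S. cyclic s) \<and> is_join_of x S)"

definition essential_gc :: "('a::bounded_lattice \<Rightarrow> 'b::bounded_lattice) \<Rightarrow> ('b \<Rightarrow> 'a) \<Rightarrow> bool" where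
  "essential_gc \<alpha> \<beta> \<longleftrightarrow> (\<forall>a. essential_in a (\<beta> (\<alpha> a)))"

definition cyclically_essential_gc :: "('a::bounded_lattice \<Rightarrow> 'b::bounded_lattice) \<Rightarrow> ('b \<Rightarrow> 'a) \<Rightarrow> bool" where
  "cyclically_essential_gc \<alpha> \<beta> \<longleftrightarrow> (\<forall>a. cyclic a \<longrightarrow> essential_in a (\<beta> (\<alpha> a)))"

definition retractable_gc :: "('a::bounded_lattice \<Rightarrow> 'b::bounded_lattice) \<Rightarrow> ('b \<Rightarrow> 'a) \<Rightarrow> bool" where
  "retractable_gc \<alpha> \<beta> \<longleftrightarrow> (\<forall>b. essential_in (\<alpha> (\<beta> b)) b)"

definition additive :: "('b::bounded_lattice \<Rightarrow> 'a::bounded_lattice) \<Rightarrow> bool" where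
  "additive \<beta> \<longleftrightarrow> (\<forall>b b'. inf b b' = bot \<longrightarrow> \<beta> (sup b b') = sup (\<beta> b) (\<beta> b'))"

end

theory Submission
  imports Defs
begin

lemma fjoin_empty[simp]: "fjoin {} = bot"
  by (simp add: fjoin_def)

lemma fjoin_insert[simp]: fixes x :: "'a::bounded_lattice" shows "finite F \<Longrightarrow> fjoin (insert x F) = sup x (fjoin F)"
proof -
  assume "finite F"
  interpret comp_fun_idem "sup :: 'a \<Rightarrow> 'a \<Rightarrow> 'a" by (fact comp_fun_idem_sup)
  show ?thesis using \<open>finite F\<close> by (simp add: fjoin_def)
qed

lemma fjoin_single[simp]: "fjoin {x} = x"
  by simp

lemma fjoin_upper: "finite F \<Longrightarrow> x \<in> F \<Longrightarrow> x \<le> fjoin F"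
  by (induction F rule: finite_induct) (auto intro: le_supI2)

lemma fjoin_least: "finite F \<Longrightarrow> (\<forall>x\<in>F. x \<le> u) \<Longrightarrow> fjoin F \<le> u"
  by (induction F rule: finite_induct) auto

lemma gc_le: "galois_connection \<alpha> \<beta> \<Longrightarrow> (\<alpha> a \<le> b) = (a \<le> \<beta> b)"
  by (simp add: galois_connection_def)

lemma gc_unit: "galois_connection \<alpha> \<beta> \<Longrightarrow> a \<le> \<beta> (\<alpha> a)"
  using gc_le by blast

lemma gc_counit: "galois_connection \<alpha> \<beta> \<Longrightarrow> \<alpha> (\<beta> b) \<le> b"
  using gc_le by blast

lemma gc_alpha_bot:
  fixes \<alpha> :: "'a::bounded_lattice \<Rightarrow> 'b::bounded_lattice"
  shows "galois_connection \<alpha> \<beta> \<Longrightarrow> \<alpha> bot = bot"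
  using gc_le[of \<alpha> \<beta> bot bot] by (simp add: bot_unique)

lemma gc_alpha_sup:
  fixes \<alpha> :: "'a::bounded_lattice \<Rightarrow> 'b::bounded_lattice"
  assumes g: "galois_connection \<alpha> \<beta>"
  shows "\<alpha> (sup x y) = sup (\<alpha> x) (\<alpha> y)"
proof (rule antisym)
  have m: "mono \<alpha>" "mono \<beta>" using g by (auto simp: galois_connection_def)
  have "x \<le> \<beta> (sup (\<alpha> x) (\<alpha> y))"
    using gc_unit[OF g, of x] monoD[OF m(2), of "\<alpha> x" "sup (\<alpha> x) (\<alpha> y)"] by auto
  moreover have "y \<le> \<beta> (sup (\<alpha> x) (\<alpha> y))"
    using gc_unit[OF g, of y] monoD[OF m(2), of "\<alpha> y" "sup (\<alpha> x) (\<alpha> y)"] by auto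
  ultimately show "\<alpha> (sup x y) \<le> sup (\<alpha> x) (\<alpha> y)" using gc_le[OF g] by simp
  show "sup (\<alpha> x) (\<alpha> y) \<le> \<alpha> (sup x y)"
    using monoD[OF m(1)] by simp
qed

lemma gc_beta_inf:
  fixes \<alpha> :: "'a::bounded_lattice \<Rightarrow> 'b::bounded_lattice"
  assumes g: "galois_connection \<alpha> \<beta>"
  shows "\<beta> (inf x y) = inf (\<beta> x) (\<beta> y)"
proof (rule antisym)
  have m: "mono \<alpha>" "mono \<beta>" using g by (auto simp: galois_connection_def)
  show "\<beta> (inf x y) \<le> inf (\<beta> x) (\<beta> y)" using monoD[OF m(2)] by simp
  have "\<alpha> (inf (\<beta> x) (\<beta> y)) \<le> x"
    using gc_counit[OF g, of x] monoD[OF m(1), of "inf (\<beta> x) (\<beta> y)" "\<beta> x"] by auto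
  moreover have "\<alpha> (inf (\<beta> x) (\<beta> y)) \<le> y"
    using gc_counit[OF g, of y] monoD[OF m(1), of "inf (\<beta> x) (\<beta> y)" "\<beta> y"] by auto
  ultimately have "\<alpha> (inf (\<beta> x) (\<beta> y)) \<le> inf x y" by simp
  thus "inf (\<beta> x) (\<beta> y) \<le> \<beta> (inf x y)" using gc_le[OF g] by blast
qed

lemma gc_alpha_fjoin:
  fixes \<alpha> :: "'a::bounded_lattice \<Rightarrow> 'b::bounded_lattice"
  assumes g: "galois_connection \<alpha> \<beta>" and "finite F"
  shows "\<alpha> (fjoin F) = fjoin (\<alpha> ` F)"
  using assms(2) by (induction F rule: finite_induct)
    (auto simp: gc_alpha_bot[OF g] gc_alpha_sup[OF g])

lemma beta_zero:
  fixes \<alpha> :: "'a::bounded_lattice \<Rightarrow> 'b::bounded_lattice"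
  assumes g: "galois_connection \<alpha> \<beta>" and r: "retractable_gc \<alpha> \<beta>" and "\<beta> b = bot"
  shows "b = bot"
  using r assms(3) gc_alpha_bot[OF g] unfolding retractable_gc_def essential_in_def
  by (metis inf_bot_left order_refl)

lemma ess_disj:
  "essential_in x x' \<Longrightarrow> essential_in y y' \<Longrightarrow> inf x y = bot \<Longrightarrow> inf x' y' = bot"
proof -
  assume ex: "essential_in x x'" and ey: "essential_in y y'" and d: "inf x y = bot"
  have xx: "x \<le> x'" and yy: "y \<le> y'" using ex ey by (auto simp: essential_in_def)
  have "inf x (inf x' y) = inf x y" using xx by (simp add: inf.absorb1 inf_assoc[symmetric])
  hence "inf x (inf x' y) = bot" using d by simp
  hence 1: "inf x' y = bot" using ex unfolding essential_in_def by auto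
  have "inf y (inf x' y') = inf x' y" using yy by (simp add: inf_left_commute inf.absorb1)
  hence "inf y (inf x' y') = bot" using 1 by simp
  thus ?thesis using ey unfolding essential_in_def by auto
qed

lemma ess_trans:
  "essential_in u v \<Longrightarrow> essential_in v w \<Longrightarrow> essential_in u w"
proof -
  assume a: "essential_in u v" and b: "essential_in v w"
  have uv: "u \<le> v" and vw: "v \<le> w" using a b by (auto simp: essential_in_def)
  show ?thesis unfolding essential_in_def
  proof (intro conjI allI impI)
    show "u \<le> w" using uv vw by simp
    fix z assume z: "z \<le> w \<and> inf u z = bot"
    have "inf u (inf v z) = inf u z" using uv by (simp add: inf_assoc[symmetric] inf.absorb1)
    hence "inf v z = bot" using a z unfolding essential_in_def by auto
    thus "z = bot" using b z unfolding essential_in_def by auto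
  qed
qed
lemma modD:
  fixes x :: "'a::bounded_lattice"
  shows "modular_lattice TYPE('a) \<Longrightarrow> x \<le> z \<Longrightarrow> sup x (inf y z) = inf (sup x y) z"
  unfolding modular_lattice_def by blast

lemma ess_sup1:
  fixes x :: "'a::bounded_lattice"
  assumes M: "modular_lattice TYPE('a)" and ex: "essential_in x x'" and d: "inf x' y = bot"
  shows "essential_in (sup x y) (sup x' y)"
  unfolding essential_in_def
proof (intro conjI allI impI)
  have xx: "x \<le> x'" using ex by (simp add: essential_in_def)
  thus "sup x y \<le> sup x' y" by (rule sup_mono) simp
  fix z assume "z \<le> sup x' y \<and> inf (sup x y) z = bot"
  hence zle: "z \<le> sup x' y" and zd: "inf (sup x y) z = bot" by auto
  have m1: "sup y (inf z (sup y x)) = inf (sup y z) (sup y x)" using modD[OF M, of y "sup y x" z] by simp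
  have "inf z (sup y x) = bot" using zd by (simp add: inf_commute sup_commute)
  with m1 have a: "inf (sup y z) (sup y x) = y" by simp
  have xs: "x \<le> sup y x" by simp
  have "inf (inf (sup y z) x') x = inf (sup y z) x" using xx by (simp add: inf_assoc inf.absorb2)
  also have "\<dots> = inf (inf (sup y z) (sup y x)) x" using xs by (simp add: inf_assoc inf.absorb2)
  also have "\<dots> = inf y x" using a by simp
  also have "\<dots> \<le> inf y x'" using xx by (simp add: le_infI2)
  also have "\<dots> = bot" using d by (simp add: inf_commute)
  finally have "inf (inf (sup y z) x') x = bot" by (simp add: bot_unique)
  hence "inf x (inf (sup y z) x') = bot" by (simp add: inf_commute)
  moreover have "inf (sup y z) x' \<le> x'" by simp
  ultimately have b: "inf (sup y z) x' = bot" using ex unfolding essential_in_def by blast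
  have m2: "sup y (inf x' (sup y z)) = inf (sup y x') (sup y z)" using modD[OF M, of y "sup y z" x'] by simp
  have "inf x' (sup y z) = bot" using b by (simp add: inf_commute)
  with m2 have c: "inf (sup y x') (sup y z) = y" by simp
  have "sup y z \<le> sup y x'" using zle by (simp add: sup_commute)
  hence "inf (sup y x') (sup y z) = sup y z" by (simp add: inf.absorb2)
  with c have "sup y z = y" by simp
  hence zy: "z \<le> y" by (metis sup.cobounded2)
  hence "z \<le> sup x y" by (simp add: le_supI2)
  hence "inf (sup x y) z = z" by (simp add: inf.absorb2)
  thus "z = bot" using zd by simp
qed

lemma ess_sup:
  fixes x :: "'a::bounded_lattice"
  assumes M: "modular_lattice TYPE('a)" and ex: "essential_in x x'" and ey: "essential_in y y'"
    and d: "inf x' y' = bot"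
  shows "essential_in (sup x y) (sup x' y')"
proof -
  have yy: "y \<le> y'" using ey by (simp add: essential_in_def)
  have "inf x' y = bot" using d yy by (metis bot_unique inf_mono order_refl)
  hence 1: "essential_in (sup x y) (sup x' y)" by (rule ess_sup1[OF M ex])
  have "inf y' x' = bot" using d by (simp add: inf_commute)
  hence "essential_in (sup y x') (sup y' x')" by (rule ess_sup1[OF M ey])
  hence 2: "essential_in (sup x' y) (sup x' y')" by (simp add: sup_commute)
  show ?thesis by (rule ess_trans[OF 1 2])
qed

lemma image_indep:
  fixes \<alpha> :: "'a::bounded_lattice \<Rightarrow> 'b::bounded_lattice"
  assumes g: "galois_connection \<alpha> \<beta>" and r: "retractable_gc \<alpha> \<beta>" and b0: "\<beta> bot = bot"
    and fY: "finite Y" and iY: "join_independent Y"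
    and H: "\<And>F. finite F \<Longrightarrow> F \<subseteq> Y \<Longrightarrow> essential_in (fjoin F) (\<beta> (\<alpha> (fjoin F)))"
  shows "finite (\<alpha> ` Y) \<and> join_independent (\<alpha> ` Y) \<and> card (\<alpha> ` Y) = card Y"
proof -
  have key: "inf (\<alpha> (fjoin F)) (\<alpha> x) = bot" if "finite F" "F \<subseteq> Y" "x \<in> Y" "x \<notin> F" for F x
  proof -
    have "inf (fjoin F) x = bot" using iY that unfolding join_independent_def by blast
    moreover have "essential_in x (\<beta> (\<alpha> x))" using H[of "{x}"] that by simp
    ultimately have "inf (\<beta> (\<alpha> (fjoin F))) (\<beta> (\<alpha> x)) = bot"
      using ess_disj H that by blast
    hence "\<beta> (inf (\<alpha> (fjoin F)) (\<alpha> x)) = bot" by (simp add: gc_beta_inf[OF g])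
    thus ?thesis by (rule beta_zero[OF g r])
  qed
  have nb: "\<alpha> y \<noteq> bot" if "y \<in> Y" for y
  proof
    assume "\<alpha> y = bot"
    hence "\<beta> (\<alpha> y) = bot" using b0 by simp
    moreover have "y \<le> \<beta> (\<alpha> y)" by (rule gc_unit[OF g])
    ultimately have "y = bot" by (simp add: bot_unique)
    thus False using iY that unfolding join_independent_def by blast
  qed
  have inj: "inj_on \<alpha> Y"
  proof (rule inj_onI, rule ccontr)
    fix x y assume "x \<in> Y" "y \<in> Y" "\<alpha> x = \<alpha> y" "x \<noteq> y"
    hence "inf (\<alpha> (fjoin {y})) (\<alpha> x) = bot" using key[of "{y}" x] by auto
    thus False using \<open>\<alpha> x = \<alpha> y\<close> nb \<open>x \<in> Y\<close> by simp
  qed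
  have "join_independent (\<alpha> ` Y)"
    unfolding join_independent_def
  proof (intro conjI allI impI)
    show "bot \<notin> \<alpha> ` Y" using nb by (metis imageE)
    fix G z assume a: "finite G \<and> G \<subseteq> \<alpha> ` Y \<and> z \<in> \<alpha> ` Y - G"
    define F where "F = {y \<in> Y. \<alpha> y \<in> G}"
    have fF: "finite F" using fY by (simp add: F_def)
    have GF: "G = \<alpha> ` F" using a by (auto simp: F_def)
    obtain x where x: "x \<in> Y" "z = \<alpha> x" using a by blast
    have "x \<notin> F" using a x by (simp add: F_def)
    have "inf (\<alpha> (fjoin F)) (\<alpha> x) = bot"
      by (rule key) (use fF \<open>x \<notin> F\<close> x in \<open>auto simp: F_def\<close>)
    thus "inf (fjoin G) z = bot" using GF x gc_alpha_fjoin[OF g fF] by simp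
  qed
  thus ?thesis using fY inj by (simp add: card_image)
qed

lemma beta_side:
  fixes \<alpha> :: "'a::bounded_lattice \<Rightarrow> 'b::bounded_lattice"
  assumes g: "galois_connection \<alpha> \<beta>" and r: "retractable_gc \<alpha> \<beta>" and b0: "\<beta> bot = bot"
    and fY: "finite Y" and iY: "join_independent Y"
  shows "finite (\<beta> ` Y) \<and> join_independent (\<beta> ` Y) \<and> card (\<beta> ` Y) = card Y"
proof -
  have mb: "mono \<beta>" using g by (simp add: galois_connection_def)
  have key: "inf (fjoin (\<beta> ` F)) (\<beta> x) = bot" if "finite F" "F \<subseteq> Y" "x \<in> Y" "x \<notin> F" for F x
  proof -
    have "inf (fjoin F) x = bot" using iY that unfolding join_independent_def by blast
    hence "inf (\<beta> (fjoin F)) (\<beta> x) = bot" using b0 by (simp add: gc_beta_inf[OF g, symmetric])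
    moreover have "fjoin (\<beta> ` F) \<le> \<beta> (fjoin F)"
      using that(1) by (auto intro!: fjoin_least monoD[OF mb] fjoin_upper)
    ultimately show ?thesis by (metis bot_unique inf_mono order_refl)
  qed
  have nb: "\<beta> y \<noteq> bot" if "y \<in> Y" for y
  proof
    assume "\<beta> y = bot"
    hence "y = bot" by (rule beta_zero[OF g r])
    thus False using iY that unfolding join_independent_def by blast
  qed
  have inj: "inj_on \<beta> Y"
  proof (rule inj_onI, rule ccontr)
    fix x y assume "x \<in> Y" "y \<in> Y" "\<beta> x = \<beta> y" "x \<noteq> y"
    hence "inf (fjoin (\<beta> ` {y})) (\<beta> x) = bot" using key[of "{y}" x] by auto
    thus False using \<open>\<beta> x = \<beta> y\<close> nb \<open>x \<in> Y\<close> by simp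
  qed
  have "join_independent (\<beta> ` Y)"
    unfolding join_independent_def
  proof (intro conjI allI impI)
    show "bot \<notin> \<beta> ` Y" using nb by (metis imageE)
    fix G z assume a: "finite G \<and> G \<subseteq> \<beta> ` Y \<and> z \<in> \<beta> ` Y - G"
    define F where "F = {y \<in> Y. \<beta> y \<in> G}"
    have fF: "finite F" using fY by (simp add: F_def)
    have GF: "G = \<beta> ` F" using a by (auto simp: F_def)
    obtain x where x: "x \<in> Y" "z = \<beta> x" using a by blast
    have "x \<notin> F" using a x by (simp add: F_def)
    have "inf (fjoin (\<beta> ` F)) (\<beta> x) = bot"
      by (rule key) (use fF \<open>x \<notin> F\<close> x in \<open>auto simp: F_def\<close>)
    thus "inf (fjoin G) z = bot" using GF x by simp
  qed
  thus ?thesis using fY inj by (simp add: card_image)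
qed

lemma ess_induct:
  fixes \<alpha> :: "'a::bounded_lattice \<Rightarrow> 'b::bounded_lattice"
  assumes M: "modular_lattice TYPE('a)"
    and g: "galois_connection \<alpha> \<beta>" and r: "retractable_gc \<alpha> \<beta>" and b0: "\<beta> bot = bot"
    and ad: "additive \<beta>" and iC: "join_independent C"
    and E: "\<And>c. c \<in> C \<Longrightarrow> essential_in c (\<beta> (\<alpha> c))"
  shows "finite F \<Longrightarrow> F \<subseteq> C \<Longrightarrow> essential_in (fjoin F) (\<beta> (\<alpha> (fjoin F)))"
proof (induction F rule: finite_induct)
  case empty
  show ?case using b0 gc_alpha_bot[OF g] by (simp add: essential_in_def bot_unique)
next
  case (insert c F)
  let ?s = "fjoin F"
  have es: "essential_in ?s (\<beta> (\<alpha> ?s))" using insert by simp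
  have ec: "essential_in c (\<beta> (\<alpha> c))" using insert E by simp
  have "inf ?s c = bot" using iC insert unfolding join_independent_def by blast
  hence d: "inf (\<beta> (\<alpha> ?s)) (\<beta> (\<alpha> c)) = bot" using ess_disj[OF es ec] by simp
  hence "\<beta> (inf (\<alpha> ?s) (\<alpha> c)) = bot" by (simp add: gc_beta_inf[OF g])
  hence "inf (\<alpha> ?s) (\<alpha> c) = bot" by (rule beta_zero[OF g r])
  hence "\<beta> (sup (\<alpha> ?s) (\<alpha> c)) = sup (\<beta> (\<alpha> ?s)) (\<beta> (\<alpha> c))"
    using ad unfolding additive_def by blast
  hence eq: "\<beta> (\<alpha> (sup ?s c)) = sup (\<beta> (\<alpha> ?s)) (\<beta> (\<alpha> c))" by (simp add: gc_alpha_sup[OF g])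
  have "essential_in (sup ?s c) (sup (\<beta> (\<alpha> ?s)) (\<beta> (\<alpha> c)))"
    by (rule ess_sup[OF M es ec d])
  thus ?case using insert eq by (simp add: sup_commute)
qed

lemma cyc_side:
  fixes \<alpha> :: "'a::bounded_lattice \<Rightarrow> 'b::bounded_lattice" and Y :: "'a set"
  assumes M: "modular_lattice TYPE('a)"
    and g: "galois_connection \<alpha> \<beta>" and r: "retractable_gc \<alpha> \<beta>" and b0: "\<beta> bot = bot"
    and ad: "additive \<beta>" and cg: "cyclically_generated TYPE('a)"
    and ce: "cyclically_essential_gc \<alpha> \<beta>"
    and fY: "finite Y" and iY: "join_independent Y"
  shows "\<exists>Z::'b set. finite Z \<and> join_independent Z \<and> card Z = card Y"
proof -
  have ex: "\<exists>s. cyclic s \<and> s \<le> y \<and> s \<noteq> bot" if "y \<in> Y" for y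
  proof -
    have "\<exists>S. (\<forall>s\<in>S. cyclic s) \<and> is_join_of y S" using cg unfolding cyclically_generated_def by simp
    then obtain S where S: "\<forall>s\<in>S. cyclic s" "is_join_of y S" by blast
    have "y \<noteq> bot" using iY that unfolding join_independent_def by blast
    show ?thesis
    proof (rule ccontr)
      assume nt: "\<not> ?thesis"
      have "\<forall>s\<in>S. s \<le> bot"
      proof
        fix s assume "s \<in> S"
        hence "cyclic s" "s \<le> y" using S unfolding is_join_of_def by auto
        hence "s = bot" using nt by blast
        thus "s \<le> bot" by simp
      qed
      hence "y \<le> bot" using S(2) unfolding is_join_of_def by blast
      thus False using \<open>y \<noteq> bot\<close> by (simp add: bot_unique)
    qed
  qed
  define c :: "'a \<Rightarrow> 'a" where "c y = (SOME s. cyclic s \<and> s \<le> y \<and> s \<noteq> bot)" for y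
  have c: "cyclic (c y) \<and> c y \<le> y \<and> c y \<noteq> bot" if "y \<in> Y" for y
    unfolding c_def using someI_ex[OF ex[OF that]] .
  have inj: "inj_on c Y"
  proof (rule inj_onI, rule ccontr)
    fix x y assume xy: "x \<in> Y" "y \<in> Y" "c x = c y" "x \<noteq> y"
    have "inf (fjoin {y}) x = bot" using iY xy unfolding join_independent_def by blast
    hence "inf y x = bot" by simp
    moreover have "c x \<le> inf y x" using c[OF xy(1)] c[OF xy(2)] xy(3) by simp
    ultimately show False using c xy by (simp add: bot_unique)
  qed
  have iC: "join_independent (c ` Y)"
    unfolding join_independent_def
  proof (intro conjI allI impI)
    show "bot \<notin> c ` Y" using c by (metis imageE)
    fix G z assume a: "finite G \<and> G \<subseteq> c ` Y \<and> z \<in> c ` Y - G"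
    define F where "F = {y \<in> Y. c y \<in> G}"
    have fF: "finite F" using fY by (simp add: F_def)
    have GF: "G = c ` F" using a by (auto simp: F_def)
    obtain x where x: "x \<in> Y" "z = c x" using a by blast
    have "x \<notin> F" using a x by (simp add: F_def)
    have jb: "inf (fjoin F) x = bot" using iY fF \<open>x \<notin> F\<close> x unfolding join_independent_def F_def by blast
    have "fjoin G \<le> fjoin F"
    proof (rule fjoin_least)
      show "finite G" using a by blast
      show "\<forall>g\<in>G. g \<le> fjoin F"
      proof
        fix g assume "g \<in> G"
        then obtain y where y: "y \<in> F" "g = c y" using GF by blast
        have "y \<in> Y" using y F_def by simp
        hence "g \<le> y" using c y by simp
        also have "y \<le> fjoin F" by (rule fjoin_upper[OF fF y(1)])
        finally show "g \<le> fjoin F" .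
      qed
    qed
    moreover have "z \<le> x" using c x by simp
    ultimately have "inf (fjoin G) z \<le> inf (fjoin F) x" by (rule inf_mono)
    thus "inf (fjoin G) z = bot" using jb by (simp add: bot_unique)
  qed
  have E: "essential_in d (\<beta> (\<alpha> d))" if "d \<in> c ` Y" for d
    using that c ce unfolding cyclically_essential_gc_def by blast
  have "finite (\<alpha> ` (c ` Y)) \<and> join_independent (\<alpha> ` (c ` Y)) \<and> card (\<alpha> ` (c ` Y)) = card (c ` Y)"
    by (rule image_indep[OF g r b0]) (use fY iC ess_induct[OF M g r b0 ad iC E] in auto)
  moreover have "card (c ` Y) = card Y" using inj by (rule card_image)
  ultimately show ?thesis by metis
qed

theorem theorem4p1:
  fixes \<alpha> :: "'a::bounded_lattice \<Rightarrow> 'b::bounded_lattice" and \<beta> :: "'b \<Rightarrow> 'a"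
  assumes "modular_lattice TYPE('a)" and "modular_lattice TYPE('b)"
    and "galois_connection \<alpha> \<beta>" and "retractable_gc \<alpha> \<beta>" and "\<beta> bot = bot"
  shows "udim TYPE('b) \<le> udim TYPE('a) \<and>
         (essential_gc \<alpha> \<beta> \<longrightarrow> udim TYPE('a) = udim TYPE('b)) \<and>
         (cyclically_generated TYPE('a) \<and> cyclically_essential_gc \<alpha> \<beta> \<and> additive \<beta>
           \<longrightarrow> udim TYPE('a) = udim TYPE('b))"
proof -
  note g = assms(3) and r = assms(4) and b0 = assms(5)
  have le: "udim TYPE('b) \<le> udim TYPE('a)"
    unfolding udim_def
  proof (rule Sup_mono)
    fix n assume "n \<in> {enat (card Y) |Y::'b set. finite Y \<and> join_independent Y}"
    then obtain Y :: "'b set" where Y: "n = enat (card Y)" "finite Y" "join_independent Y" by blast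
    have "finite (\<beta> ` Y) \<and> join_independent (\<beta> ` Y) \<and> card (\<beta> ` Y) = card Y"
      by (rule beta_side[OF g r b0 Y(2,3)])
    thus "\<exists>m\<in>{enat (card Y) |Y::'a set. finite Y \<and> join_independent Y}. n \<le> m"
      using Y(1) by (metis (mono_tags, lifting) mem_Collect_eq order_refl)
  qed
  have ge: "udim TYPE('a) \<le> udim TYPE('b)"
    if H: "\<And>Y::'a set. finite Y \<Longrightarrow> join_independent Y \<Longrightarrow> \<exists>Z::'b set. finite Z \<and> join_independent Z \<and> card Z = card Y"
    unfolding udim_def
  proof (rule Sup_mono)
    fix n assume "n \<in> {enat (card Y) |Y::'a set. finite Y \<and> join_independent Y}"
    then obtain Y :: "'a set" where Y: "n = enat (card Y)" "finite Y" "join_independent Y" by blast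
    obtain Z :: "'b set" where "finite Z \<and> join_independent Z \<and> card Z = card Y" using H[OF Y(2,3)] by blast
    thus "\<exists>m\<in>{enat (card Y) |Y::'b set. finite Y \<and> join_independent Y}. n \<le> m"
      using Y(1) by (metis (mono_tags, lifting) mem_Collect_eq order_refl)
  qed
  have ii: "udim TYPE('a) = udim TYPE('b)" if eg: "essential_gc \<alpha> \<beta>"
  proof -
    have "udim TYPE('a) \<le> udim TYPE('b)"
    proof (rule ge)
      fix Y :: "'a set" assume "finite Y" "join_independent Y"
      have "finite (\<alpha> ` Y) \<and> join_independent (\<alpha> ` Y) \<and> card (\<alpha> ` Y) = card Y"
        by (rule image_indep[OF g r b0 \<open>finite Y\<close> \<open>join_independent Y\<close>])
           (use eg in \<open>simp add: essential_gc_def\<close>)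
      thus "\<exists>Z::'b set. finite Z \<and> join_independent Z \<and> card Z = card Y" by blast
    qed
    thus ?thesis using le by simp
  qed
  have iii: "udim TYPE('a) = udim TYPE('b)"
    if h: "cyclically_generated TYPE('a)" "cyclically_essential_gc \<alpha> \<beta>" "additive \<beta>"
  proof -
    have "udim TYPE('a) \<le> udim TYPE('b)"
      by (rule ge) (rule cyc_side[OF assms(1) g r b0 h(3) h(1) h(2)])
    thus ?thesis using le by simp
  qed
  show ?thesis using le ii iii by blast
qed

end
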